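(* Let $P$ be a finite poset and $p\in(0,1]$. For any order ideal $J'\in J(P)$ and any $t\ge 0$, \[ \mathbb{P}\big(T_{J(P)}(J')\ge t\big)\le \mathbb{P}\big(T(J(P))\ge t\big). \]
   Context: An order ideal of $P$ is a subset $I\subseteq P$ such that $x\in I$ and $y\le x$ imply $y\in I$. $J(P)$ is the lattice of order ideals of $P$ ordered by inclusion. The Ungarian Markov chain on $J(P)$ with parameter $p$ moves from an order ideal $I$ by deleting from $I$ a random subset of its maximal elements, each maximal element being deleted independently with probability $p$ (equivalently: for a finite lattice $L$, from $x$ choose each element covered by $x$ independently with probability $p$ and move to the meet of $x$ and the chosen elements). $T_{J(P)}(J')$ is the number of steps for this chain started at $J'$ to reach $\varnothing$, and $T(J(P))=T_{J(P)}(P)$. *)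

theory Defs
  imports "HOL-Probability.Probability"
begin

text \<open>A finite poset is modelled as a finite subset P of a type with a partial order;
  the order on P is the induced one.\<close>

definition order_ideals :: "'a::order set \<Rightarrow> 'a set set" where
  "order_ideals P = {I. I \<subseteq> P \<and> (\<forall>x\<in>I. \<forall>y\<in>P. y \<le> x \<longrightarrow> y \<in> I)}"

definition maximal_elems :: "'a::order set \<Rightarrow> 'a set" where
  "maximal_elems I = {x\<in>I. \<not> (\<exists>y\<in>I. x < y)}"

definition ungar_step :: "real \<Rightarrow> 'a::order set \<Rightarrow> 'a set pmf" where
  "ungar_step p I =
     map_pmf (\<lambda>b. I - {x\<in>maximal_elems I. b x})
             (Pi_pmf (maximal_elems I) False (\<lambda>_. bernoulli_pmf p))"

fun ungar_walk :: "real \<Rightarrow> 'a::order set \<Rightarrow> nat \<Rightarrow> 'a set list pmf" where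
  "ungar_walk p I 0 = return_pmf [I]"
| "ungar_walk p I (Suc n) =
     bind_pmf (ungar_walk p I n) (\<lambda>xs. map_pmf (\<lambda>y. xs @ [y]) (ungar_step p (last xs)))"

text \<open>Probability that the hitting time T(I) of the empty ideal satisfies T(I) \<ge> t,
  i.e. that X_k \<noteq> {} for all k < t.\<close>
definition hit_time_ge :: "real \<Rightarrow> 'a::order set \<Rightarrow> nat \<Rightarrow> real" where
  "hit_time_ge p I t =
     measure_pmf.prob (ungar_walk p I t) {xs. \<forall>k<t. xs ! k \<noteq> {}}"

end

theory Submission
  imports Defs
begin

lemma measure_bind_pmf':
  "measure (measure_pmf (bind_pmf M N)) X = (\<integral>x. measure (measure_pmf (N x)) X \<partial>measure_pmf M)"
proof -
  have "ennreal (measure (measure_pmf (bind_pmf M N)) X) = emeasure (measure_pmf (bind_pmf M N)) X"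
    by (rule measure_pmf.emeasure_eq_measure[symmetric])
  also have "\<dots> = (\<integral>\<^sup>+x. ennreal (measure (measure_pmf (N x)) X) \<partial>measure_pmf M)"
    by (subst emeasure_bind_pmf) (simp only: measure_pmf.emeasure_eq_measure)
  also have "\<dots> = ennreal (\<integral>x. measure (measure_pmf (N x)) X \<partial>measure_pmf M)"
    by (intro nn_integral_eq_integral measure_pmf.integrable_const_bound[where B=1]) auto
  finally show ?thesis
    by (subst (asm) ennreal_inj) (auto intro: integral_nonneg_AE)
qed

lemma walk_nonempty:
  "xs \<in> set_pmf (ungar_walk p I n) \<Longrightarrow> xs \<noteq> []"
  by (induction n arbitrary: xs) auto

lemma walk_Suc':
  "ungar_walk p I (Suc n) =
     bind_pmf (ungar_step p I) (\<lambda>J. map_pmf (\<lambda>xs. I # xs) (ungar_walk p J n))"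
proof (induction n)
  case 0
  then show ?case by (simp add: map_pmf_def bind_return_pmf)
next
  case (Suc n)
  have "ungar_walk p I (Suc (Suc n)) =
     bind_pmf (ungar_walk p I (Suc n)) (\<lambda>xs. map_pmf (\<lambda>y. xs @ [y]) (ungar_step p (last xs)))"
    by simp
  also have "\<dots> = bind_pmf (ungar_step p I) (\<lambda>J. bind_pmf (ungar_walk p J n)
        (\<lambda>xs. map_pmf (\<lambda>y. (I # xs) @ [y]) (ungar_step p (last (I # xs)))))"
    unfolding ungar_walk.simps(2)[of p I "Suc n"] Suc bind_assoc_pmf bind_map_pmf o_def list.sel
    by (rule refl)
  also have "\<dots> = bind_pmf (ungar_step p I) (\<lambda>J. map_pmf (\<lambda>xs. I # xs) (ungar_walk p J (Suc n)))"
  proof (intro bind_pmf_cong refl)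
    fix J
    have "bind_pmf (ungar_walk p J n)
        (\<lambda>xs. map_pmf (\<lambda>y. (I # xs) @ [y]) (ungar_step p (last (I # xs)))) =
        bind_pmf (ungar_walk p J n)
        (\<lambda>xs. map_pmf (\<lambda>xs. I # xs) (map_pmf (\<lambda>y. xs @ [y]) (ungar_step p (last xs))))"
      by (intro bind_pmf_cong refl) (auto simp: walk_nonempty pmf.map_comp o_def)
    also have "\<dots> = map_pmf (\<lambda>xs. I # xs) (ungar_walk p J (Suc n))"
      by (simp add: map_bind_pmf)
    finally show "bind_pmf (ungar_walk p J n)
        (\<lambda>xs. map_pmf (\<lambda>y. (I # xs) @ [y]) (ungar_step p (last (I # xs)))) =
        map_pmf (\<lambda>xs. I # xs) (ungar_walk p J (Suc n))" .
  qed
  finally show ?case .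
qed

lemma hit_0: "hit_time_ge p I 0 = 1"
  by (simp add: hit_time_ge_def)

lemma hit_Suc:
  "hit_time_ge p I (Suc t) =
     (if I = {} then 0 else \<integral>J. hit_time_ge p J t \<partial>measure_pmf (ungar_step p I))"
proof -
  have pre: "(\<lambda>xs. I # xs) -` {xs. \<forall>k<Suc t. xs ! k \<noteq> {}} =
     (if I = {} then {} else {xs. \<forall>k<t. xs ! k \<noteq> {}})"
    by (auto simp: All_less_Suc2)
  show ?thesis
    unfolding hit_time_ge_def walk_Suc' measure_bind_pmf' measure_map_pmf pre
    by simp
qed

lemma hit_nonneg: "0 \<le> hit_time_ge p I t"
  by (simp add: hit_time_ge_def)

lemma hit_le1: "hit_time_ge p I t \<le> 1"
  by (simp add: hit_time_ge_def)

lemma step_coupled: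
  assumes "finite P" "I \<subseteq> P"
  shows "ungar_step p I = map_pmf (\<lambda>b. I - {x\<in>maximal_elems I. b x})
                (Pi_pmf P False (\<lambda>_. bernoulli_pmf p))"
proof -
  have "maximal_elems I \<subseteq> P" using assms by (auto simp: maximal_elems_def)
  then show ?thesis
    unfolding ungar_step_def
    by (subst Pi_pmf_subset[OF assms(1)]) (auto simp: pmf.map_comp o_def intro!: map_pmf_cong)
qed

lemma step_mono:
  "I \<subseteq> I' \<Longrightarrow> I - {x\<in>maximal_elems I. b x} \<subseteq> I' - {x\<in>maximal_elems I'. b x}"
  by (auto simp: maximal_elems_def)

lemma hit_mono:
  assumes "finite P"
  shows "I \<subseteq> I' \<Longrightarrow> I' \<subseteq> P \<Longrightarrow> hit_time_ge p I t \<le> hit_time_ge p I' t"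
proof (induction t arbitrary: I I')
  case 0
  then show ?case by (simp add: hit_0)
next
  case (Suc t)
  show ?case
  proof (cases "I = {}")
    case True
    then show ?thesis by (simp add: hit_Suc hit_nonneg)
  next
    case False
    with Suc.prems have ne: "I' \<noteq> {}" by auto
    let ?B = "Pi_pmf P False (\<lambda>_. bernoulli_pmf p)"
    have "(\<integral>b. hit_time_ge p (I - {x\<in>maximal_elems I. b x}) t \<partial>measure_pmf ?B)
        \<le> (\<integral>b. hit_time_ge p (I' - {x\<in>maximal_elems I'. b x}) t \<partial>measure_pmf ?B)"
      by (intro integral_mono measure_pmf.integrable_const_bound[where B=1] Suc.IH step_mono Suc.prems)
         (use Suc.prems in \<open>auto simp: hit_nonneg hit_le1\<close>)
    then show ?thesis
      using False ne Suc.prems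
      by (simp add: hit_Suc step_coupled[OF assms])
  qed
qed

theorem corollary2p4:
  fixes P :: "'a::order set" and J' :: "'a set" and p :: real and t :: nat
  assumes "finite P" and "0 < p" and "p \<le> 1" and "J' \<in> order_ideals P"
  shows "hit_time_ge p J' t \<le> hit_time_ge p P t"
  using hit_mono[OF assms(1)] assms(4) by (auto simp: order_ideals_def)

end
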